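(* Let $m\ge 2$ be an integer, let $B\subseteq m\mathbb Z$ be finite, and let $F\subseteq\mathbb Z$ be a finite nonempty set whose elements all lie in a single congruence class modulo $m$ different from $0\bmod m$. If there exists $W\subseteq\mathbb Z$ with $m\mathbb Z_-\setminus B=F+W$, then $C=m\mathbb N\cup B\cup F$ arises as a minimal additive complement in $\mathbb Z$.
   Context: $\mathbb N=\{0,1,2,\dots\}$, $m\mathbb N=\{mk:k\in\mathbb N\}$, and $m\mathbb Z_-=\{mk:k\in\mathbb Z,\ k<0\}$. For $C,W\subseteq\mathbb Z$, $C+W=\{c+w:c\in C,w\in W\}$. $C$ is a minimal additive complement (MAC) to $W$ if $C+W=\mathbb Z$ and no proper subset $C'\subsetneq C$ satisfies $C'+W=\mathbb Z$. $C$ arises as a MAC if there exists $W\subseteq\mathbb Z$ to which $C$ is a MAC. *)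

theory Defs
  imports Main
begin

definition sumset :: "int set \<Rightarrow> int set \<Rightarrow> int set" where
  "sumset C W = {c + w | c w. c \<in> C \<and> w \<in> W}"

definition is_MAC :: "int set \<Rightarrow> int set \<Rightarrow> bool" where
  "is_MAC C W \<longleftrightarrow> sumset C W = UNIV \<and> (\<forall>C'. C' \<subset> C \<longrightarrow> sumset C' W \<noteq> UNIV)"

definition arises_as_MAC :: "int set \<Rightarrow> bool" where
  "arises_as_MAC C \<longleftrightarrow> (\<exists>W. is_MAC C W)"

end

theory Submission
  imports Defs
begin

lemma sumset_iff: "y \<in> sumset C W \<longleftrightarrow> (\<exists>c\<in>C. \<exists>w\<in>W. y = c + w)"
  unfolding sumset_def by auto

theorem proposition3:
  fixes m :: int and B F :: "int set"
  assumes "m \<ge> 2"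
    and "finite B" and "\<forall>b\<in>B. m dvd b"
    and "finite F" and "F \<noteq> {}"
    and "\<exists>r. \<not> m dvd r \<and> (\<forall>f\<in>F. f mod m = r mod m)"
    and "\<exists>W. {m * k | k. k < 0} - B = sumset F W"
  shows "arises_as_MAC ({m * int k | k. True} \<union> B \<union> F)"
proof -
  obtain r where r: "\<not> m dvd r" "\<forall>f\<in>F. f mod m = r mod m" using assms(6) by blast
  have Fr: "m dvd (f - r)" if "f \<in> F" for f using r(2) that by (simp add: mod_eq_dvd_iff)
  obtain W0 where W0: "{m * k | k. k < 0} - B = sumset F W0" using assms(7) by blast
  define T where "T = {m * k | k. k < 0} - B"
  define N where "N = {m * int k | k. True}"
  define C where "C = N \<union> B \<union> F"
  define a where "a = Min F"
  define b where "b = Max F"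
  have aF: "a \<in> F" unfolding a_def using assms(4,5) by simp
  have bF: "b \<in> F" unfolding b_def using assms(4,5) by simp
  have ab: "a \<le> f \<and> f \<le> b" if "f \<in> F" for f
    unfolding a_def b_def using assms(4) that by simp
  define D where "D = b - a"
  have D0: "0 \<le> D" using ab[OF aF] D_def by simp
  define \<beta> where "\<beta> = (\<Sum>x\<in>B. \<bar>x\<bar>)"
  have Bb: "\<bar>x\<bar> \<le> \<beta>" if "x \<in> B" for x
    unfolding \<beta>_def by (rule member_le_sum[OF that _ assms(2)]) simp
  have \<beta>0: "0 \<le> \<beta>" by (simp add: \<beta>_def sum_nonneg)
  define L where "L = - \<beta> - \<bar>b\<bar> - 1"
  have Tchar: "y \<in> T \<longleftrightarrow> m dvd y \<and> y < 0 \<and> y \<notin> B" for y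
  proof
    assume "y \<in> T"
    then obtain k where "y = m * k" "k < 0" "y \<notin> B" unfolding T_def by blast
    moreover have "m * k < 0" using \<open>k < 0\<close> assms(1) by (simp add: mult_pos_neg)
    ultimately show "m dvd y \<and> y < 0 \<and> y \<notin> B" by auto
  next
    assume h: "m dvd y \<and> y < 0 \<and> y \<notin> B"
    have "y = m * (y div m)" using h by simp
    moreover have "y div m < 0" using h assms(1) by (simp add: pos_imp_zdiv_neg_iff)
    ultimately show "y \<in> T" unfolding T_def using h by blast
  qed
  have lowT: "y \<in> T" if "m dvd y" "y < L + b" for y
  proof -
    have "y < - \<beta>" using that L_def by linarith
    then have "y \<notin> B" using Bb by fastforce
    moreover have "y < 0" using \<open>y < - \<beta>\<close> \<beta>0 by linarith
    ultimately show ?thesis using Tchar that by blast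
  qed
  define K where "K = D + 1"
  define \<nu> where "\<nu> = -(\<bar>L\<bar> + \<bar>D\<bar> + \<bar>a\<bar> + 1)"
  define \<mu> where "\<mu> = m * \<nu>"
  have "m * \<nu> \<le> 1 * \<nu>"
    by (rule mult_right_mono_neg) (use assms(1) \<nu>_def in auto)
  then have "m * \<nu> \<le> \<nu>" by simp
  then have \<mu>: "\<mu> < L - D + a" unfolding \<mu>_def \<nu>_def
    using abs_ge_minus_self[of L] abs_ge_self[of D] abs_ge_minus_self[of a] by linarith
  define t where "t g = m * K * (g - b) + \<mu>" for g
  have mK: "m * K \<ge> 2 * K" using assms(1) K_def D0 by (intro mult_right_mono) auto
  have t_le: "t g \<le> \<mu>" if "g \<in> F" for g
  proof -
    have "m * K * (g - b) \<le> 0" using mK ab[OF that] K_def D0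
      by (intro mult_nonneg_nonpos) auto
    then show ?thesis unfolding t_def by simp
  qed
  have t_dvd: "m dvd t g" for g unfolding t_def \<mu>_def by simp
  have spacing1: "2 * D < t g' - t g" if "g < g'" for g g'
  proof -
    have "t g' - t g = m * K * (g' - g)" unfolding t_def by (simp add: algebra_simps)
    moreover have "m * K * 1 \<le> m * K * (g' - g)"
      using that mK K_def D0 by (intro mult_left_mono) auto
    ultimately show ?thesis using mK K_def by linarith
  qed
  have spacing: "2 * D < t g - t g' \<or> 2 * D < t g' - t g" if "g \<noteq> g'" for g g'
    using spacing1[of g g'] spacing1[of g' g] that by linarith
  define Forb where "Forb = {t g - h | g h. g \<in> F \<and> h \<in> F \<and> h \<noteq> g}"
  have Forb_mem: "x \<in> Forb \<longleftrightarrow> (\<exists>g h. x = t g - h \<and> g \<in> F \<and> h \<in> F \<and> h \<noteq> g)" for x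
    unfolding Forb_def by blast
  have Forb_lt: "x < L - D" if xF: "x \<in> Forb" for x
  proof -
    obtain g h where "x = t g - h" "g \<in> F" "h \<in> F" using xF Forb_mem by blast
    then show ?thesis using t_le[OF \<open>g \<in> F\<close>] ab[OF \<open>h \<in> F\<close>] \<mu> by linarith
  qed
  define Wlow where "Wlow = {w. m dvd (w + r) \<and> w < L \<and> w \<notin> Forb}"
  define Wtop where "Wtop = {w \<in> W0. L \<le> w}"
  define WA where "WA = Wtop \<union> Wlow"
  define Wo where "Wo = {x. \<not> m dvd x \<and> \<not> m dvd (x + r)}"
  define W where "W = {0} \<union> WA \<union> Wo"
  have W0': "T = sumset F W0" using W0 T_def by simp
  have W0T: "f + w \<in> T" if "f \<in> F" "w \<in> W0" for f w
  proof -
    have "f + w \<in> sumset F W0" using that unfolding sumset_iff by blast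
    then show ?thesis using W0' by simp
  qed
  have W0dvd: "m dvd (w + r)" if "w \<in> W0" for w
  proof -
    have "m dvd (a + w)" using W0T[OF aF that] Tchar by blast
    moreover have "w + r = (a + w) - (a - r)" by simp
    ultimately show ?thesis using Fr[OF aF] by (metis dvd_diff)
  qed
  have WAdvd: "m dvd (w + r)" if "w \<in> WA" for w
    using that W0dvd unfolding WA_def Wtop_def Wlow_def by blast
  have FWA_sub: "f + w \<in> T" if "f \<in> F" "w \<in> WA" for f w
  proof (cases "w \<in> Wtop")
    case True then show ?thesis using W0T that Wtop_def by blast
  next
    case False
    then have w: "m dvd (w + r)" "w < L" using that WA_def Wlow_def by auto
    have "f + w = (f - r) + (w + r)" by simp
    then have "m dvd (f + w)" using w Fr[OF that(1)] by (metis dvd_add)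
    moreover have "f + w < L + b" using ab[OF that(1)] w by linarith
    ultimately show ?thesis using lowT by blast
  qed
  have pigeon: "\<exists>f\<in>F. y - f \<notin> Forb" for y
  proof (rule ccontr)
    assume "\<not> ?thesis"
    then have all: "\<forall>f\<in>F. y - f \<in> Forb" by blast
    obtain g0 h0 where g0: "y - a = t g0 - h0" "g0 \<in> F" "h0 \<in> F" "h0 \<noteq> g0"
      using all aF Forb_mem by blast
    have "F \<subseteq> (\<lambda>h. y - t g0 + h) ` (F - {g0})"
    proof
      fix f assume f: "f \<in> F"
      obtain g h where gh: "y - f = t g - h" "g \<in> F" "h \<in> F" "h \<noteq> g"
        using all f Forb_mem by blast
      have "g = g0"
      proof (rule ccontr)
        assume "g \<noteq> g0"
        have e: "t g - t g0 = h - h0 + a - f" using gh(1) g0(1) by linarith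
        show False using spacing[OF \<open>g \<noteq> g0\<close>] e ab[OF gh(3)] ab[OF g0(3)] ab[OF f] D_def
          by linarith
      qed
      then have "f = y - t g0 + h" using gh by simp
      then show "f \<in> (\<lambda>h. y - t g0 + h) ` (F - {g0})" using gh \<open>g = g0\<close> by blast
    qed
    then have "card F \<le> card ((\<lambda>h. y - t g0 + h) ` (F - {g0}))"
      using assms(4) by (intro card_mono) auto
    also have "\<dots> \<le> card (F - {g0})" by (rule card_image_le) (use assms(4) in simp)
    also have "\<dots> < card F" using g0(2) assms(4) by (intro card_Diff1_less)
    finally show False by simp
  qed
  have T_sub: "\<exists>f\<in>F. \<exists>w\<in>WA. y = f + w" if yT: "y \<in> T" for y
  proof -
    have ydvd: "m dvd y" using yT Tchar by blast
    consider "L + b \<le> y" | "L + a \<le> y \<and> y < L + b" | "y < L + a" by linarith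
    then show ?thesis
    proof cases
      case 1
      have "y \<in> sumset F W0" using yT W0' by simp
      then obtain f w where "f \<in> F" "w \<in> W0" "y = f + w" unfolding sumset_iff by blast
      moreover have "L \<le> w" using 1 ab[OF \<open>f \<in> F\<close>] \<open>y = f + w\<close> by linarith
      ultimately show ?thesis unfolding WA_def Wtop_def by blast
    next
      case 2
      have "y - b \<notin> Forb" using Forb_lt 2 D_def by force
      moreover have "m dvd (y - b + r)"
      proof -
        have "y - b + r = y - (b - r)" by simp
        then show ?thesis using ydvd Fr[OF bF] by (metis dvd_diff)
      qed
      ultimately have "y - b \<in> WA" using 2 unfolding WA_def Wlow_def by simp
      then show ?thesis using bF by force
    next
      case 3
      obtain f where f: "f \<in> F" "y - f \<notin> Forb" using pigeon by blast
      have "m dvd (y - f + r)"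
      proof -
        have "y - f + r = y - (f - r)" by simp
        then show ?thesis using ydvd Fr[OF f(1)] by (metis dvd_diff)
      qed
      moreover have "y - f < L" using 3 ab[OF f(1)] by linarith
      ultimately have "y - f \<in> WA" using f unfolding WA_def Wlow_def by simp
      then show ?thesis using f by force
    qed
  qed
  have uniq: "t g \<in> T \<and> t g - g \<in> WA \<and> (\<forall>h\<in>F. h \<noteq> g \<longrightarrow> t g - h \<notin> WA)" if g: "g \<in> F" for g
  proof (intro conjI ballI impI)
    have "t g < L + b" using t_le[OF g] \<mu> ab[OF aF] D_def by linarith
    then show "t g \<in> T" using lowT[OF t_dvd] by blast
    have "t g - g \<notin> Forb"
    proof
      assume "t g - g \<in> Forb"
      then obtain g' h where gh: "t g - g = t g' - h" "g' \<in> F" "h \<in> F" "h \<noteq> g'" using Forb_mem by blast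
      show False
      proof (cases "g = g'")
        case True then show False using gh by simp
      next
        case False
        then show False using spacing[OF False] gh(1) ab[OF g] ab[OF gh(3)] D_def by linarith
      qed
    qed
    moreover have "m dvd (t g - g + r)"
    proof -
      have "t g - g + r = t g - (g - r)" by simp
      then show ?thesis using t_dvd Fr[OF g] by (metis dvd_diff)
    qed
    moreover have "t g - g < L" using t_le[OF g] \<mu> ab[OF g] D_def by linarith
    ultimately show "t g - g \<in> WA" unfolding WA_def Wlow_def by simp
  next
    fix h assume h: "h \<in> F" "h \<noteq> g"
    have "t g - h \<in> Forb" using h g Forb_mem by blast
    moreover have "t g - h < L" using t_le[OF g] \<mu> ab[OF h(1)] D_def by linarith
    ultimately show "t g - h \<notin> WA" unfolding WA_def Wlow_def Wtop_def by auto
  qed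
  have NB_dvd: "m dvd c" if "c \<in> N \<union> B" for c using that assms(3) N_def by auto
  have Cclass: "m dvd c \<or> (c \<in> F \<and> m dvd (c - r))" if "c \<in> C" for c
    using that NB_dvd Fr C_def by blast
  have NB_T: "c \<notin> T" if "c \<in> N \<union> B" for c
  proof
    assume "c \<in> T"
    then have "c < 0" "c \<notin> B" using Tchar by auto
    moreover have "0 \<le> m * int k" for k using assms(1) by simp
    ultimately show False using that N_def by (auto simp: not_less[symmetric])
  qed
  have inN: "x \<in> N" if "m dvd x" "0 \<le> x" for x
  proof -
    have "0 \<le> x div m" using that assms(1) by (simp add: pos_imp_zdiv_nonneg_iff)
    then have "x = m * int (nat (x div m))" using that by simp
    then show ?thesis unfolding N_def by blast
  qed
  have zeroC: "0 \<in> C" using inN[of 0] C_def by simp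
  have cover: "sumset C W = UNIV"
  proof (rule set_eqI, simp add: sumset_iff)
    fix y
    show "\<exists>c\<in>C. \<exists>w\<in>W. y = c + w"
    proof (cases "m dvd y")
      case True
      show ?thesis
      proof (cases "y \<in> N \<union> B")
        case True
        then show ?thesis using C_def W_def by force
      next
        case False
        then have "y < 0" using inN \<open>m dvd y\<close> by force
        then have "y \<in> T" using Tchar False True by blast
        then obtain f w where "f \<in> F" "w \<in> WA" "y = f + w" using T_sub by blast
        then show ?thesis using C_def W_def by blast
      qed
    next
      case False
      show ?thesis
      proof (cases "m dvd (y + r)")
        case True
        define k where "k = -(\<bar>y\<bar> + \<bar>a\<bar> + \<bar>L\<bar> + \<bar>b\<bar> + 1)"
        have "m * k \<le> 1 * k"
          by (rule mult_right_mono_neg) (use assms(1) k_def in auto)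
        then have "m * k \<le> k" by simp
        then have "m * k < L + b" "m * k \<le> y + a" unfolding k_def
          using abs_ge_minus_self[of L] abs_ge_minus_self[of b] abs_ge_minus_self[of a] abs_ge_minus_self[of y] by linarith+
        then have "m * k \<in> T" using lowT by simp
        then obtain f w where fw: "f \<in> F" "w \<in> WA" "m * k = f + w" using T_sub by blast
        have "w \<le> y" using fw ab[OF fw(1)] \<open>m * k \<le> y + a\<close> by linarith
        moreover have "m dvd (y - w)"
        proof -
          have "y - w = (y + r) - (w + r)" by simp
          then show ?thesis using True WAdvd[OF fw(2)] by (metis dvd_diff)
        qed
        ultimately have "y - w \<in> C" using inN C_def by simp
        moreover have "y = (y - w) + w" by simp
        ultimately show ?thesis using fw(2) W_def by blast
      next
        case False
        then have "y \<in> W" using \<open>\<not> m dvd y\<close> W_def Wo_def by blast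
        then show ?thesis using zeroC by force
      qed
    qed
  qed
  have Wo_bad: "\<not> m dvd (c + w)" if "c \<in> C" "w \<in> Wo" for c w
  proof
    assume d: "m dvd (c + w)"
    from Cclass[OF that(1)] show False
    proof
      assume "m dvd c"
      then have "m dvd ((c + w) - c)" using d by (metis dvd_diff)
      then show False using that(2) Wo_def by simp
    next
      assume "c \<in> F \<and> m dvd (c - r)"
      then have "m dvd ((c + w) - (c - r))" using d by (metis dvd_diff)
      then show False using that(2) Wo_def by (simp add: algebra_simps)
    qed
  qed
  have WA_bad: "\<not> m dvd (c + w)" if "m dvd c" "w \<in> WA" for c w
  proof
    assume d: "m dvd (c + w)"
    have "m dvd ((w + r) - ((c + w) - c))" using d that WAdvd by (metis dvd_diff)
    then show False using r(1) by simp
  qed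
  have minimal: "\<forall>C'. C' \<subset> C \<longrightarrow> sumset C' W \<noteq> UNIV"
  proof (intro allI impI notI)
    fix C' assume sub: "C' \<subset> C" and eq: "sumset C' W = UNIV"
    obtain c where c: "c \<in> C" "c \<notin> C'" using sub by blast
    have rep: "\<exists>c'\<in>C'. \<exists>w\<in>W. y = c' + w" for y using eq by (simp add: sumset_iff set_eq_iff)
    show False
    proof (cases "c \<in> F")
      case True
      note U = uniq[OF True]
      obtain c' w where cw: "c' \<in> C'" "w \<in> W" "t c = c' + w" using rep by blast
      have c'C: "c' \<in> C" using cw sub by blast
      have tdvd: "m dvd (c' + w)" using cw t_dvd by metis
      consider "w = 0" | "w \<in> WA" | "w \<in> Wo" using cw W_def by blast
      then show False
      proof cases
        case 1
        then have "c' \<in> T" using cw U by simp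
        moreover have "m dvd c'" using tdvd 1 by simp
        have "c' \<notin> F"
        proof
          assume "c' \<in> F"
          then have "m dvd (c' - (c' - r))" using Fr \<open>m dvd c'\<close> dvd_diff by blast
          then show False using r(1) by simp
        qed
        then have "c' \<in> N \<union> B" using c'C C_def by blast
        then show False using NB_T \<open>c' \<in> T\<close> by blast
      next
        case 2
        show False
        proof (cases "m dvd c'")
          case True then show False using WA_bad 2 tdvd by blast
        next
          case False
          then have "c' \<in> F" using Cclass[OF c'C] by blast
          moreover have "c' \<noteq> c" using c cw by blast
          moreover have "w = t c - c'" using cw by simp
          ultimately show False using U 2 by blast
        qed
      next
        case 3 then show False using Wo_bad c'C tdvd by blast
      qed
    next
      case False
      then have cNB: "c \<in> N \<union> B" using c C_def by blast
      obtain c' w where cw: "c' \<in> C'" "w \<in> W" "c = c' + w" using rep by blast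
      have c'C: "c' \<in> C" using cw sub by blast
      have cdvd: "m dvd (c' + w)" using cw NB_dvd[OF cNB] by simp
      consider "w = 0" | "w \<in> WA" | "w \<in> Wo" using cw W_def by blast
      then show False
      proof cases
        case 1 then show False using cw c by simp
      next
        case 2
        show False
        proof (cases "m dvd c'")
          case True then show False using WA_bad 2 cdvd by blast
        next
          case False
          then have "c' \<in> F" using Cclass[OF c'C] by blast
          then have "c \<in> T" using FWA_sub 2 cw by simp
          then show False using NB_T cNB by blast
        qed
      next
        case 3 then show False using Wo_bad c'C cdvd by blast
      qed
    qed
  qed
  have "is_MAC C W" unfolding is_MAC_def using cover minimal by blast
  then show ?thesis unfolding arises_as_MAC_def C_def N_def by blast
qed

end
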